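(* Let $M$ be a loopless matroid on a finite nonempty ground set $E$ with density $\rho=|E|/\operatorname{rank}(E)$. The following are equivalent: (1) the base polytope $P(M)$ contains the point $(\rho^{-1},\dots,\rho^{-1})$ in its relative interior; (2) $\rho(A)\le\rho(E)$ for all nonempty $A\subseteq E$, with strict inequality whenever $A$ is not a union of ground sets of connected components of $M$; (3) there exists a measure $\mu$ on the bases with $\mu(B)>0$ for every basis $B$ such that $\mu(\{B: B\ni e\})$ is the same for all $e\in E$.
   Context: $\operatorname{rank}(A)=\max_B|A\cap B|$ over bases $B$; $\rho(A)=|A|/\operatorname{rank}(A)$. $P(M)$ is the convex hull of the $0$–$1$ indicator vectors of bases. The direct sum of matroids on disjoint ground sets has as bases the unions of one basis from each. A matroid is connected if it is not a direct sum of two matroids on nonempty ground sets; every matroid decomposes uniquely as $M=\bigoplus_{i=1}^\ell M_i$ with each $M_i$ connected on $E_i$, $E=E_1\sqcup\dots\sqcup E_\ell$; these $M_i$ are the connected components. A matroid satisfying these conditions is called strictly uniformly dense. *)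

theory Defs
  imports "HOL-Analysis.Analysis"
begin

definition matroid :: "'a set \<Rightarrow> 'a set set \<Rightarrow> bool" where
  "matroid E \<B> \<longleftrightarrow> finite E \<and> \<B> \<noteq> {} \<and> (\<forall>B\<in>\<B>. B \<subseteq> E) \<and>
     (\<forall>B1\<in>\<B>. \<forall>B2\<in>\<B>. \<forall>x\<in>B1 - B2. \<exists>y\<in>B2 - B1. insert y (B1 - {x}) \<in> \<B>)"

definition loopless :: "'a set \<Rightarrow> 'a set set \<Rightarrow> bool" where
  "loopless E \<B> \<longleftrightarrow> (\<forall>e\<in>E. \<exists>B\<in>\<B>. e \<in> B)"

definition mrank :: "'a set set \<Rightarrow> 'a set \<Rightarrow> nat" where
  "mrank \<B> A = Max ((\<lambda>B. card (A \<inter> B)) ` \<B>)"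

definition density :: "'a set set \<Rightarrow> 'a set \<Rightarrow> real" where
  "density \<B> A = real (card A) / real (mrank \<B> A)"

definition is_direct_sum :: "'a set \<Rightarrow> 'a set set \<Rightarrow> 'a set \<Rightarrow> 'a set set \<Rightarrow> 'a set \<Rightarrow> 'a set set \<Rightarrow> bool" where
  "is_direct_sum E \<B> S \<B>1 T \<B>2 \<longleftrightarrow> matroid S \<B>1 \<and> matroid T \<B>2 \<and> S \<inter> T = {} \<and> S \<union> T = E \<and>
     \<B> = {B1 \<union> B2 | B1 B2. B1 \<in> \<B>1 \<and> B2 \<in> \<B>2}"

definition connected_matroid :: "'a set \<Rightarrow> 'a set set \<Rightarrow> bool" where
  "connected_matroid E \<B> \<longleftrightarrow> matroid E \<B> \<and>
     \<not> (\<exists>S \<B>1 T \<B>2. S \<noteq> {} \<and> T \<noteq> {} \<and> is_direct_sum E \<B> S \<B>1 T \<B>2)"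

definition component_decomposition :: "'a set \<Rightarrow> 'a set set \<Rightarrow> ('a set \<times> 'a set set) set \<Rightarrow> bool" where
  "component_decomposition E \<B> \<C> \<longleftrightarrow> finite \<C> \<and>
     (\<forall>c\<in>\<C>. fst c \<noteq> {} \<and> connected_matroid (fst c) (snd c)) \<and>
     (\<forall>c\<in>\<C>. \<forall>d\<in>\<C>. c \<noteq> d \<longrightarrow> fst c \<inter> fst d = {}) \<and>
     \<Union> (fst ` \<C>) = E \<and>
     \<B> = {\<Union> (f ` \<C>) | f. \<forall>c\<in>\<C>. f c \<in> snd c}"

text \<open>A is a union of ground sets of connected components of (E,\<B>).
  (The decomposition into connected components is unique.)\<close>
definition union_of_components :: "'a set \<Rightarrow> 'a set set \<Rightarrow> 'a set \<Rightarrow> bool" where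
  "union_of_components E \<B> A \<longleftrightarrow>
     (\<exists>\<C>. component_decomposition E \<B> \<C> \<and> (\<exists>\<D>\<subseteq>\<C>. A = \<Union> (fst ` \<D>)))"

definition base_polytope :: "'e::finite set set \<Rightarrow> (real ^ 'e) set" where
  "base_polytope \<B> = convex hull ((\<lambda>B. \<chi> e. if e \<in> B then 1 else 0) ` \<B>)"

end

theory Submission
  imports Defs
begin


lemma mat_finite: "matroid E \<B> \<Longrightarrow> finite E" by (simp add: matroid_def)
lemma mat_sub: "matroid E \<B> \<Longrightarrow> B \<in> \<B> \<Longrightarrow> B \<subseteq> E" by (simp add: matroid_def)
lemma mat_fin_basis: "matroid E \<B> \<Longrightarrow> B \<in> \<B> \<Longrightarrow> finite B"
  using mat_finite mat_sub finite_subset by metis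
lemma mat_fin_bases: "matroid E \<B> \<Longrightarrow> finite \<B>"
proof -
  assume m: "matroid E \<B>"
  have "\<B> \<subseteq> Pow E" using mat_sub[OF m] by auto
  then show ?thesis using finite_subset mat_finite[OF m] by (metis finite_Pow_iff)
qed
lemma mat_ne: "matroid E \<B> \<Longrightarrow> \<B> \<noteq> {}" by (simp add: matroid_def)
lemma mat_exch: "matroid E \<B> \<Longrightarrow> B1 \<in> \<B> \<Longrightarrow> B2 \<in> \<B> \<Longrightarrow> x \<in> B1 - B2
   \<Longrightarrow> \<exists>y\<in>B2 - B1. insert y (B1 - {x}) \<in> \<B>"
  unfolding matroid_def by blast

lemma bases_card_eq_aux:
  assumes m: "matroid E \<B>"
  shows "\<forall>B1. B1 \<in> \<B> \<longrightarrow> B2 \<in> \<B> \<longrightarrow> card (B1 - B2) = k \<longrightarrow> card B1 = card B2"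
proof (induction k)
  case 0
  show ?case
  proof (intro allI impI)
    fix B1 assume b1: "B1 \<in> \<B>" and b2: "B2 \<in> \<B>" and c: "card (B1 - B2) = 0"
    have "B1 - B2 = {}" using c mat_fin_basis[OF m b1] by simp
    moreover have "B2 - B1 = {}"
    proof (rule ccontr)
      assume "B2 - B1 \<noteq> {}"
      then obtain y where "y \<in> B2 - B1" by blast
      from mat_exch[OF m b2 b1 this] \<open>B1 - B2 = {}\<close> show False by blast
    qed
    ultimately show "card B1 = card B2" by (metis Diff_eq_empty_iff subset_antisym)
  qed
next
  case (Suc k)
  show ?case
  proof (intro allI impI)
    fix B1 assume b1: "B1 \<in> \<B>" and b2: "B2 \<in> \<B>" and c: "card (B1 - B2) = Suc k"
    then obtain x where x: "x \<in> B1 - B2" by (metis card.empty ex_in_conv nat.distinct(1))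
    from mat_exch[OF m b1 b2 x] obtain y where y: "y \<in> B2 - B1" and b1': "insert y (B1 - {x}) \<in> \<B>" by blast
    have "insert y (B1 - {x}) - B2 = (B1 - B2) - {x}" using y by auto
    then have "card (insert y (B1 - {x}) - B2) = k" using c x mat_fin_basis[OF m b1] by simp
    with Suc.IH b1' b2 have "card (insert y (B1 - {x})) = card B2" by blast
    moreover have "card (insert y (B1 - {x})) = card B1"
    proof -
      have "card B1 > 0" using x mat_fin_basis[OF m b1] card_gt_0_iff by blast
      then show ?thesis using x y mat_fin_basis[OF m b1] by simp
    qed
    ultimately show "card B1 = card B2" by simp
  qed
qed

lemma bases_card_eq: "matroid E \<B> \<Longrightarrow> B1 \<in> \<B> \<Longrightarrow> B2 \<in> \<B> \<Longrightarrow> card B1 = card B2"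
  using bases_card_eq_aux by blast

lemma augment:
  assumes m: "matroid E \<B>" and I: "I \<subseteq> BI0" "BI0 \<in> \<B>" and J: "J \<subseteq> BJ" "BJ \<in> \<B>"
    and lt: "card I < card J"
  shows "\<exists>x\<in>J - I. \<exists>B\<in>\<B>. insert x I \<subseteq> B"
proof (rule ccontr)
  assume no: "\<not> ?thesis"
  let ?S = "{B\<in>\<B>. I \<subseteq> B}"
  have finS: "finite ?S" using mat_fin_bases[OF m] by simp
  have neS: "?S \<noteq> {}" using I by blast
  let ?m = "Max ((\<lambda>B. card (B \<inter> BJ)) ` ?S)"
  obtain BI where BI: "BI \<in> ?S" "card (BI \<inter> BJ) = ?m"
    using Max_in[of "(\<lambda>B. card (B \<inter> BJ)) ` ?S"] finS neS by (metis (no_types, lifting) finite_imageI image_iff image_is_empty)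
  have mx: "\<And>B. B \<in> ?S \<Longrightarrow> card (B \<inter> BJ) \<le> ?m" using finS by simp
  have finBI: "finite BI" using mat_fin_basis[OF m] BI by blast
  have finBJ: "finite BJ" using mat_fin_basis[OF m] J by blast
  have s1: "BI - I \<subseteq> BJ"
  proof
    fix x assume x: "x \<in> BI - I"
    show "x \<in> BJ"
    proof (rule ccontr)
      assume "x \<notin> BJ"
      then have "x \<in> BI - BJ" using x by blast
      from mat_exch[OF m _ J(2) this] BI obtain y where y: "y \<in> BJ - BI" and
        b': "insert y (BI - {x}) \<in> \<B>" by blast
      have "insert y (BI - {x}) \<in> ?S" using b' BI x by auto
      moreover have "insert y (BI - {x}) \<inter> BJ = insert y (BI \<inter> BJ)" using y \<open>x \<notin> BJ\<close> by auto
      then have "card (insert y (BI - {x}) \<inter> BJ) = Suc (card (BI \<inter> BJ))" using y finBI by simp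
      ultimately show False using mx BI by fastforce
    qed
  qed
  have s2: "BI \<inter> J \<subseteq> I"
  proof
    fix x assume x: "x \<in> BI \<inter> J"
    show "x \<in> I"
    proof (rule ccontr)
      assume "x \<notin> I"
      then have "x \<in> J - I" using x by blast
      moreover have "insert x I \<subseteq> BI" using x BI by auto
      ultimately show False using no BI by blast
    qed
  qed
  have "BI - I \<subseteq> BJ - J" using s1 s2 by blast
  then have c1: "card (BI - I) \<le> card (BJ - J)" using finBJ by (simp add: card_mono)
  have "card BI = card I + card (BI - I)" using BI finBI
    by (metis (no_types, lifting) card_Diff_subset add_diff_inverse_nat card_mono finite_subset mem_Collect_eq not_less)
  moreover have "card BJ = card J + card (BJ - J)" using J finBJ
    by (metis card_Diff_subset add_diff_inverse_nat card_mono finite_subset not_less)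
  moreover have "card BI = card BJ" using bases_card_eq[OF m] BI J by blast
  ultimately show False using c1 lt by linarith
qed


lemma mrank_ge: "matroid E \<B> \<Longrightarrow> B \<in> \<B> \<Longrightarrow> card (A \<inter> B) \<le> mrank \<B> A"
  unfolding mrank_def using mat_fin_bases by (metis (no_types, lifting) Max_ge finite_imageI image_eqI)

lemma mrank_att: "matroid E \<B> \<Longrightarrow> \<exists>B\<in>\<B>. card (A \<inter> B) = mrank \<B> A"
  unfolding mrank_def using mat_fin_bases mat_ne
  by (metis (no_types, lifting) Max_in finite_imageI image_iff image_is_empty)

lemma mrank_insert: "matroid E \<B> \<Longrightarrow> mrank \<B> (insert e S) \<le> Suc (mrank \<B> S)"
proof -
  assume m: "matroid E \<B>"
  obtain B where B: "B \<in> \<B>" "card (insert e S \<inter> B) = mrank \<B> (insert e S)" using mrank_att[OF m] by blast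
  have fin: "finite B" using mat_fin_basis[OF m B(1)] .
  have "insert e S \<inter> B \<subseteq> insert e (S \<inter> B)" by blast
  then have "card (insert e S \<inter> B) \<le> card (insert e (S \<inter> B))" using fin by (simp add: card_mono)
  also have "\<dots> \<le> Suc (card (S \<inter> B))" using fin by (simp add: card_insert_le_m1)
  also have "\<dots> \<le> Suc (mrank \<B> S)" using mrank_ge[OF m B(1)] by simp
  finally show ?thesis using B by simp
qed

lemma chain_basis:
  assumes m: "matroid E \<B>"
  shows "k \<le> length es \<Longrightarrow> \<exists>B\<in>\<B>. \<forall>j\<le>k. card (set (take j es) \<inter> B) = mrank \<B> (set (take j es))"
proof (induction k)
  case 0
  obtain B where "B \<in> \<B>" using mat_ne[OF m] by blast
  moreover obtain B' where "B' \<in> \<B>" "card ({} \<inter> B') = mrank \<B> {}" using mrank_att[OF m] by blast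
  ultimately show ?case by auto
next
  case (Suc k)
  then obtain B where B: "B \<in> \<B>" and Bj: "\<forall>j\<le>k. card (set (take j es) \<inter> B) = mrank \<B> (set (take j es))" by auto
  define S where "S = set (take k es)"
  define e where "e = es ! k"
  have S': "set (take (Suc k) es) = insert e S"
    using Suc.prems by (simp add: S_def e_def take_Suc_conv_app_nth)
  show ?case
  proof (cases "mrank \<B> (insert e S) \<le> card (insert e S \<inter> B)")
    case True
    then have "card (insert e S \<inter> B) = mrank \<B> (insert e S)" using mrank_ge[OF m B] by (simp add: le_antisym)
    then show ?thesis using B Bj S' by (metis le_Suc_eq)
  next
    case False
    obtain B2 where B2: "B2 \<in> \<B>" "card (insert e S \<inter> B2) = mrank \<B> (insert e S)" using mrank_att[OF m] by blast
    define I where "I = S \<inter> B"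
    define J where "J = insert e S \<inter> B2"
    have finB: "finite B" using mat_fin_basis[OF m B] .
    have cI: "card I = mrank \<B> S" using Bj S_def I_def by (metis Int_commute le_refl)
    have "card I \<le> card (insert e S \<inter> B)" unfolding I_def using finB by (intro card_mono) auto
    then have lt: "card I < card J" using False B2(2) unfolding J_def by linarith
    obtain x B' where x: "x \<in> J - I" and B': "B' \<in> \<B>" "insert x I \<subseteq> B'"
      using augment[OF m _ B _ B2(1) lt] I_def J_def by blast
    have finB': "finite B'" using mat_fin_basis[OF m B'(1)] .
    have "x \<notin> S"
    proof
      assume "x \<in> S"
      then have "insert x I \<subseteq> S \<inter> B'" using B' I_def by auto
      then have "card (insert x I) \<le> card (S \<inter> B')" using finB' by (simp add: card_mono)
      moreover have "card (insert x I) = Suc (card I)" using x finB I_def by simp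
      ultimately show False using mrank_ge[OF m B'(1), of S] cI by simp
    qed
    then have xe: "x = e" using x J_def by blast
    have good: "\<forall>j\<le>Suc k. card (set (take j es) \<inter> B') = mrank \<B> (set (take j es))"
    proof (intro allI impI)
      fix j assume j: "j \<le> Suc k"
      show "card (set (take j es) \<inter> B') = mrank \<B> (set (take j es))"
      proof (cases "j \<le> k")
        case True
        have sub: "set (take j es) \<subseteq> S" unfolding S_def using True by (simp add: set_take_subset_set_take)
        have "set (take j es) \<inter> B \<subseteq> set (take j es) \<inter> B'" using sub B' I_def by auto
        then have "card (set (take j es) \<inter> B) \<le> card (set (take j es) \<inter> B')" using finB' by (simp add: card_mono)
        then show ?thesis using Bj True mrank_ge[OF m B'(1)] by (metis le_antisym)
      next
        case False
        then have jk: "j = Suc k" using j by simp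
        have "insert e I \<subseteq> insert e S \<inter> B'" using B' xe I_def by auto
        then have "card (insert e I) \<le> card (insert e S \<inter> B')" using finB' by (meson card_mono finite_Int)
        moreover have "card (insert e I) = Suc (card I)" using x xe finB I_def by simp
        ultimately have "Suc (mrank \<B> S) \<le> card (insert e S \<inter> B')" using cI by simp
        then show ?thesis using mrank_insert[OF m, of e S] mrank_ge[OF m B'(1), of "insert e S"] jk S' by simp
      qed
    qed
    then show ?thesis using B' by blast
  qed
qed



lemma mix_aux:
  assumes m: "matroid E \<B>" and sep: "\<forall>X\<in>\<B>. card (A \<inter> X) = k" and B: "B \<in> \<B>"
  shows "\<forall>X. X \<in> \<B> \<longrightarrow> X - A = B' - A \<longrightarrow> card (X \<inter> A - B) = n \<longrightarrow> (B \<inter> A) \<union> (B' - A) \<in> \<B>"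
proof (induction n)
  case 0
  show ?case
  proof (intro allI impI)
    fix X assume X: "X \<in> \<B>" "X - A = B' - A" "card (X \<inter> A - B) = 0"
    have fX: "finite X" using mat_fin_basis[OF m X(1)] .
    have fB: "finite B" using mat_fin_basis[OF m B] .
    have "X \<inter> A - B = {}" using X(3) fX by simp
    then have sub: "X \<inter> A \<subseteq> B \<inter> A" by blast
    have "card (X \<inter> A) = card (B \<inter> A)" using sep X(1) B by (metis Int_commute)
    then have "X \<inter> A = B \<inter> A" using sub fB by (simp add: card_subset_eq)
    then have "X = (B \<inter> A) \<union> (B' - A)" using X(2) by blast
    then show "(B \<inter> A) \<union> (B' - A) \<in> \<B>" using X(1) by simp
  qed
next
  case (Suc n)
  show ?case
  proof (intro allI impI)
    fix X assume X: "X \<in> \<B>" "X - A = B' - A" "card (X \<inter> A - B) = Suc n"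
    have fX: "finite X" using mat_fin_basis[OF m X(1)] .
    obtain x where x: "x \<in> X \<inter> A - B" using X(3) by (metis card.empty ex_in_conv nat.distinct(1))
    then have "x \<in> X - B" by blast
    from mat_exch[OF m X(1) B this] obtain y where y: "y \<in> B - X" and X': "insert y (X - {x}) \<in> \<B>" by blast
    have yA: "y \<in> A"
    proof (rule ccontr)
      assume "y \<notin> A"
      then have "A \<inter> insert y (X - {x}) = (A \<inter> X) - {x}" by blast
      then have "card (A \<inter> insert y (X - {x})) = card (A \<inter> X) - 1" using x fX by simp
      moreover have "card (A \<inter> X) > 0" using x fX card_gt_0_iff by blast
      ultimately show False using sep X' X(1) by force
    qed
    have "insert y (X - {x}) - A = B' - A" using X(2) x yA by blast
    moreover have "insert y (X - {x}) \<inter> A - B = (X \<inter> A - B) - {x}" using y by blast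
    then have "card (insert y (X - {x}) \<inter> A - B) = n" using X(3) x fX by simp
    ultimately show "(B \<inter> A) \<union> (B' - A) \<in> \<B>" using Suc.IH X' by blast
  qed
qed

lemma mix:
  assumes m: "matroid E \<B>" and sep: "\<forall>X\<in>\<B>. card (A \<inter> X) = k" and B: "B \<in> \<B>" and B': "B' \<in> \<B>"
  shows "(B \<inter> A) \<union> (B' - A) \<in> \<B>"
  using mix_aux[OF m sep B, of B' "card (B' \<inter> A - B)"] B' by blast

lemma sep_direct_sum:
  assumes m: "matroid E \<B>" and sep: "\<forall>X\<in>\<B>. card (A \<inter> X) = k" and AE: "A \<subseteq> E"
  shows "is_direct_sum E \<B> A ((\<lambda>B. B \<inter> A) ` \<B>) (E - A) ((\<lambda>B. B - A) ` \<B>)"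
proof -
  have finE: "finite E" using mat_finite[OF m] .
  have m1: "matroid A ((\<lambda>B. B \<inter> A) ` \<B>)"
    unfolding matroid_def
  proof (intro conjI ballI)
    show "finite A" using finE AE finite_subset by blast
    show "(\<lambda>B. B \<inter> A) ` \<B> \<noteq> {}" using mat_ne[OF m] by simp
  next
    fix B assume "B \<in> (\<lambda>B. B \<inter> A) ` \<B>" then show "B \<subseteq> A" by blast
  next
    fix B1 B2 x assume b1: "B1 \<in> (\<lambda>B. B \<inter> A) ` \<B>" and b2: "B2 \<in> (\<lambda>B. B \<inter> A) ` \<B>" and x: "x \<in> B1 - B2"
    obtain C1 where C1: "C1 \<in> \<B>" "B1 = C1 \<inter> A" using b1 by blast
    obtain C2 where C2: "C2 \<in> \<B>" "B2 = C2 \<inter> A" using b2 by blast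
    have "x \<in> C1 - C2" using x C1 C2 by blast
    from mat_exch[OF m C1(1) C2(1) this] obtain y where y: "y \<in> C2 - C1" and C': "insert y (C1 - {x}) \<in> \<B>" by blast
    have fC1: "finite C1" using mat_fin_basis[OF m C1(1)] .
    have yA: "y \<in> A"
    proof (rule ccontr)
      assume "y \<notin> A"
      then have "A \<inter> insert y (C1 - {x}) = (A \<inter> C1) - {x}" by blast
      then have "card (A \<inter> insert y (C1 - {x})) = card (A \<inter> C1) - 1" using x C1 fC1 by simp
      moreover have "card (A \<inter> C1) > 0" using x C1 fC1 card_gt_0_iff by blast
      ultimately show False using sep C' C1(1) by force
    qed
    have "insert y (B1 - {x}) = insert y (C1 - {x}) \<inter> A" using yA C1 by blast
    then have "insert y (B1 - {x}) \<in> (\<lambda>B. B \<inter> A) ` \<B>" using C' by blast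
    moreover have "y \<in> B2 - B1" using y yA C1 C2 by blast
    ultimately show "\<exists>y\<in>B2 - B1. insert y (B1 - {x}) \<in> (\<lambda>B. B \<inter> A) ` \<B>" by blast
  qed
  have m2: "matroid (E - A) ((\<lambda>B. B - A) ` \<B>)"
    unfolding matroid_def
  proof (intro conjI ballI)
    show "finite (E - A)" using finE by blast
    show "(\<lambda>B. B - A) ` \<B> \<noteq> {}" using mat_ne[OF m] by simp
  next
    fix B assume "B \<in> (\<lambda>B. B - A) ` \<B>" then show "B \<subseteq> E - A" using mat_sub[OF m] by blast
  next
    fix B1 B2 x assume b1: "B1 \<in> (\<lambda>B. B - A) ` \<B>" and b2: "B2 \<in> (\<lambda>B. B - A) ` \<B>" and x: "x \<in> B1 - B2"
    obtain C1 where C1: "C1 \<in> \<B>" "B1 = C1 - A" using b1 by blast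
    obtain C2 where C2: "C2 \<in> \<B>" "B2 = C2 - A" using b2 by blast
    have "x \<in> C1 - C2" using x C1 C2 by blast
    from mat_exch[OF m C1(1) C2(1) this] obtain y where y: "y \<in> C2 - C1" and C': "insert y (C1 - {x}) \<in> \<B>" by blast
    have fC1: "finite C1" using mat_fin_basis[OF m C1(1)] .
    have yA: "y \<notin> A"
    proof
      assume "y \<in> A"
      then have "A \<inter> insert y (C1 - {x}) = insert y (A \<inter> C1)" using x C1 by blast
      then have "card (A \<inter> insert y (C1 - {x})) = Suc (card (A \<inter> C1))" using y fC1 by simp
      then show False using sep C' C1(1) by force
    qed
    have "insert y (B1 - {x}) = insert y (C1 - {x}) - A" using yA C1 by blast
    then have "insert y (B1 - {x}) \<in> (\<lambda>B. B - A) ` \<B>" using C' by blast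
    moreover have "y \<in> B2 - B1" using y yA C1 C2 by blast
    ultimately show "\<exists>y\<in>B2 - B1. insert y (B1 - {x}) \<in> (\<lambda>B. B - A) ` \<B>" by blast
  qed
  have eq: "\<B> = {B1 \<union> B2 | B1 B2. B1 \<in> (\<lambda>B. B \<inter> A) ` \<B> \<and> B2 \<in> (\<lambda>B. B - A) ` \<B>}"
  proof
    show "\<B> \<subseteq> {B1 \<union> B2 | B1 B2. B1 \<in> (\<lambda>B. B \<inter> A) ` \<B> \<and> B2 \<in> (\<lambda>B. B - A) ` \<B>}"
    proof
      fix B assume "B \<in> \<B>"
      moreover have "B = (B \<inter> A) \<union> (B - A)" by blast
      ultimately show "B \<in> {B1 \<union> B2 | B1 B2. B1 \<in> (\<lambda>B. B \<inter> A) ` \<B> \<and> B2 \<in> (\<lambda>B. B - A) ` \<B>}" by blast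
    qed
    show "{B1 \<union> B2 | B1 B2. B1 \<in> (\<lambda>B. B \<inter> A) ` \<B> \<and> B2 \<in> (\<lambda>B. B - A) ` \<B>} \<subseteq> \<B>"
      using mix[OF m sep] by blast
  qed
  show ?thesis unfolding is_direct_sum_def using m1 m2 eq AE by blast
qed


lemma cd_fin: "component_decomposition E \<B> C \<Longrightarrow> finite C"
  unfolding component_decomposition_def by (elim conjE)
lemma cd_comp: "component_decomposition E \<B> C \<Longrightarrow> \<forall>c\<in>C. fst c \<noteq> {} \<and> connected_matroid (fst c) (snd c)"
  unfolding component_decomposition_def by (elim conjE)
lemma cd_dis: "component_decomposition E \<B> C \<Longrightarrow> \<forall>c\<in>C. \<forall>d\<in>C. c \<noteq> d \<longrightarrow> fst c \<inter> fst d = {}"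
  unfolding component_decomposition_def by (elim conjE)
lemma cd_un: "component_decomposition E \<B> C \<Longrightarrow> \<Union> (fst ` C) = E"
  unfolding component_decomposition_def by (elim conjE)
lemma cd_bases: "component_decomposition E \<B> C \<Longrightarrow> \<B> = {\<Union> (f ` C) | f. \<forall>c\<in>C. f c \<in> snd c}"
  unfolding component_decomposition_def by (elim conjE)
lemma cd_intro: "finite C \<Longrightarrow> \<forall>c\<in>C. fst c \<noteq> {} \<and> connected_matroid (fst c) (snd c) \<Longrightarrow>
  \<forall>c\<in>C. \<forall>d\<in>C. c \<noteq> d \<longrightarrow> fst c \<inter> fst d = {} \<Longrightarrow> \<Union> (fst ` C) = E \<Longrightarrow>
  \<B> = {\<Union> (f ` C) | f. \<forall>c\<in>C. f c \<in> snd c} \<Longrightarrow> component_decomposition E \<B> C"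
  unfolding component_decomposition_def by (intro conjI)
lemma ds_D: "is_direct_sum E \<B> S \<B>1 T \<B>2 \<Longrightarrow> matroid S \<B>1 \<and> matroid T \<B>2 \<and> S \<inter> T = {} \<and> S \<union> T = E"
  unfolding is_direct_sum_def by (elim conjE) (intro conjI)
lemma ds_bases: "is_direct_sum E \<B> S \<B>1 T \<B>2 \<Longrightarrow> \<B> = {B1 \<union> B2 | B1 B2. B1 \<in> \<B>1 \<and> B2 \<in> \<B>2}"
  unfolding is_direct_sum_def by (elim conjE)

lemma glue:
  assumes ds: "is_direct_sum E \<B> S \<B>1 T \<B>2"
    and c1: "component_decomposition S \<B>1 C1" and c2: "component_decomposition T \<B>2 C2"
  shows "component_decomposition E \<B> (C1 \<union> C2)"
proof -
  have ST: "S \<inter> T = {}" "S \<union> T = E" using ds_D[OF ds] by blast+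
  have Beq: "\<B> = {B1 \<union> B2 | B1 B2. B1 \<in> \<B>1 \<and> B2 \<in> \<B>2}" using ds_bases[OF ds] .
  have U1: "\<Union> (fst ` C1) = S" and U2: "\<Union> (fst ` C2) = T" using cd_un c1 c2 by blast+
  have ne1: "\<forall>c\<in>C1. fst c \<noteq> {}" and ne2: "\<forall>c\<in>C2. fst c \<noteq> {}" using cd_comp[OF c1] cd_comp[OF c2] by blast+
  have disj: "C1 \<inter> C2 = {}"
  proof (rule ccontr)
    assume "C1 \<inter> C2 \<noteq> {}"
    then obtain c where "c \<in> C1" "c \<in> C2" by blast
    then have "fst c \<subseteq> S" "fst c \<subseteq> T" using U1 U2 by auto
    then show False using ST ne1 \<open>c \<in> C1\<close> by blast
  qed
  have B1eq: "\<B>1 = {\<Union> (f ` C1) | f. \<forall>c\<in>C1. f c \<in> snd c}" using cd_bases[OF c1] .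
  have B2eq: "\<B>2 = {\<Union> (f ` C2) | f. \<forall>c\<in>C2. f c \<in> snd c}" using cd_bases[OF c2] .
  have beq: "\<B> = {\<Union> (f ` (C1 \<union> C2)) | f. \<forall>c\<in>C1 \<union> C2. f c \<in> snd c}"
  proof
    show "\<B> \<subseteq> {\<Union> (f ` (C1 \<union> C2)) | f. \<forall>c\<in>C1 \<union> C2. f c \<in> snd c}"
    proof
      fix B assume "B \<in> \<B>"
      then obtain X1 X2 where X: "B = X1 \<union> X2" "X1 \<in> \<B>1" "X2 \<in> \<B>2" using Beq by blast
      obtain f1 where f1: "X1 = \<Union> (f1 ` C1)" "\<forall>c\<in>C1. f1 c \<in> snd c" using X(2) B1eq by blast
      obtain f2 where f2: "X2 = \<Union> (f2 ` C2)" "\<forall>c\<in>C2. f2 c \<in> snd c" using X(3) B2eq by blast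
      define f where "f = (\<lambda>c. if c \<in> C1 then f1 c else f2 c)"
      have e1: "f ` C1 = f1 ` C1" unfolding f_def by (rule image_cong) auto
      have e2: "f ` C2 = f2 ` C2" unfolding f_def using disj by (intro image_cong) auto
      have "\<Union> (f ` (C1 \<union> C2)) = \<Union> (f1 ` C1) \<union> \<Union> (f2 ` C2)"
        using e1 e2 by (simp add: image_Un)
      moreover have "\<forall>c\<in>C1 \<union> C2. f c \<in> snd c" using f1 f2 unfolding f_def by auto
      ultimately have "B = \<Union> (f ` (C1 \<union> C2)) \<and> (\<forall>c\<in>C1 \<union> C2. f c \<in> snd c)"
        using X f1 f2 by simp
      then show "B \<in> {\<Union> (f ` (C1 \<union> C2)) | f. \<forall>c\<in>C1 \<union> C2. f c \<in> snd c}"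
        by blast
    qed
    show "{\<Union> (f ` (C1 \<union> C2)) | f. \<forall>c\<in>C1 \<union> C2. f c \<in> snd c} \<subseteq> \<B>"
    proof
      fix B assume "B \<in> {\<Union> (f ` (C1 \<union> C2)) | f. \<forall>c\<in>C1 \<union> C2. f c \<in> snd c}"
      then obtain f where f: "B = \<Union> (f ` (C1 \<union> C2))" "\<forall>c\<in>C1 \<union> C2. f c \<in> snd c" by blast
      have "\<Union> (f ` C1) \<in> \<B>1" using B1eq f(2) by blast
      moreover have "\<Union> (f ` C2) \<in> \<B>2" using B2eq f(2) by blast
      moreover have "B = \<Union> (f ` C1) \<union> \<Union> (f ` C2)" using f(1) by blast
      ultimately show "B \<in> \<B>" using Beq by blast
    qed
  qed
  have dis1: "\<forall>c\<in>C1. \<forall>d\<in>C1. c \<noteq> d \<longrightarrow> fst c \<inter> fst d = {}"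
    using cd_dis[OF c1] .
  have dis2: "\<forall>c\<in>C2. \<forall>d\<in>C2. c \<noteq> d \<longrightarrow> fst c \<inter> fst d = {}"
    using cd_dis[OF c2] .
  have dd: "\<forall>c\<in>C1 \<union> C2. \<forall>d\<in>C1 \<union> C2. c \<noteq> d \<longrightarrow> fst c \<inter> fst d = {}"
  proof (intro ballI impI)
    fix c d assume c: "c \<in> C1 \<union> C2" and d: "d \<in> C1 \<union> C2" and cd: "c \<noteq> d"
    show "fst c \<inter> fst d = {}"
    proof (cases "c \<in> C1")
      case True
      show ?thesis
      proof (cases "d \<in> C1")
        case True
        then show ?thesis using dis1 \<open>c \<in> C1\<close> cd by blast
      next
        case False
        then have "d \<in> C2" using d by blast
        then show ?thesis using U1 U2 ST \<open>c \<in> C1\<close> by blast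
      qed
    next
      case False
      then have cC2: "c \<in> C2" using c by blast
      show ?thesis
      proof (cases "d \<in> C1")
        case True
        then show ?thesis using U1 U2 ST cC2 by blast
      next
        case False
        then have "d \<in> C2" using d by blast
        then show ?thesis using dis2 cC2 cd by blast
      qed
    qed
  qed
  have fin: "finite (C1 \<union> C2)" using cd_fin[OF c1] cd_fin[OF c2] by blast
  have cc: "\<forall>c\<in>C1 \<union> C2. fst c \<noteq> {} \<and> connected_matroid (fst c) (snd c)"
    using cd_comp[OF c1] cd_comp[OF c2] by blast
  have "\<Union> (fst ` (C1 \<union> C2)) = E" using U1 U2 ST by (simp add: image_Un)
  then show ?thesis using cd_intro[OF fin cc dd] beq by blast
qed

lemma decomp_exists:
  "matroid E \<B> \<Longrightarrow> E \<noteq> {} \<Longrightarrow> \<exists>C. component_decomposition E \<B> C"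
proof (induction "card E" arbitrary: E \<B> rule: less_induct)
  case less
  show ?case
  proof (cases "connected_matroid E \<B>")
    case True
    have "\<B> = {\<Union> (f ` {(E, \<B>)}) | f. \<forall>c\<in>{(E, \<B>)}. f c \<in> snd c}"
    proof
      show "\<B> \<subseteq> {\<Union> (f ` {(E, \<B>)}) | f. \<forall>c\<in>{(E, \<B>)}. f c \<in> snd c}"
      proof
        fix B assume "B \<in> \<B>"
        then show "B \<in> {\<Union> (f ` {(E, \<B>)}) | f. \<forall>c\<in>{(E, \<B>)}. f c \<in> snd c}"
          by (intro CollectI exI[of _ "\<lambda>_. B"]) auto
      qed
    qed auto
    moreover have "\<forall>c\<in>{(E, \<B>)}. fst c \<noteq> {} \<and> connected_matroid (fst c) (snd c)"
      using True less.prems by simp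
    ultimately have "component_decomposition E \<B> {(E, \<B>)}"
      by (intro cd_intro) simp_all
    then show ?thesis by blast
  next
    case False
    then obtain S \<B>1 T \<B>2 where ST: "S \<noteq> {}" "T \<noteq> {}" "is_direct_sum E \<B> S \<B>1 T \<B>2"
      unfolding connected_matroid_def using less.prems by blast
    have d: "matroid S \<B>1" "matroid T \<B>2" "S \<inter> T = {}" "S \<union> T = E"
      using ds_D[OF ST(3)] by blast+
    have finE: "finite E" using mat_finite[OF less.prems(1)] .
    have "S \<subset> E" using d ST by blast
    then have "card S < card E" using finE psubset_card_mono by blast
    then obtain C1 where "component_decomposition S \<B>1 C1" using less.hyps[OF _ d(1) ST(1)] by blast
    moreover have "T \<subset> E" using d ST by blast
    then have "card T < card E" using finE psubset_card_mono by blast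
    then obtain C2 where "component_decomposition T \<B>2 C2" using less.hyps[OF _ d(2) ST(2)] by blast
    ultimately show ?thesis using glue[OF ST(3)] by blast
  qed
qed

lemma sep_uoc:
  assumes m: "matroid E \<B>" and sep: "\<forall>X\<in>\<B>. card (A \<inter> X) = k" and AE: "A \<subseteq> E" and Ane: "A \<noteq> {}"
  shows "union_of_components E \<B> A"
proof (cases "A = E")
  case True
  obtain C where "component_decomposition E \<B> C" using decomp_exists[OF m] Ane True by blast
  then show ?thesis unfolding union_of_components_def using True cd_un
    by (metis order_refl)
next
  case False
  have ds: "is_direct_sum E \<B> A ((\<lambda>B. B \<inter> A) ` \<B>) (E - A) ((\<lambda>B. B - A) ` \<B>)"
    using sep_direct_sum[OF m sep AE] .
  then have "matroid A ((\<lambda>B. B \<inter> A) ` \<B>)" "matroid (E - A) ((\<lambda>B. B - A) ` \<B>)" using ds_D by blast+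
  moreover have "E - A \<noteq> {}" using False AE by blast
  ultimately obtain C1 C2 where C1: "component_decomposition A ((\<lambda>B. B \<inter> A) ` \<B>) C1"
    and C2: "component_decomposition (E - A) ((\<lambda>B. B - A) ` \<B>) C2"
    using decomp_exists Ane by metis
  have "component_decomposition E \<B> (C1 \<union> C2)" using glue[OF ds C1 C2] .
  moreover have "A = \<Union> (fst ` C1)" using cd_un[OF C1] by simp
  ultimately show ?thesis unfolding union_of_components_def by blast
qed

lemma uoc_sep:
  assumes u: "union_of_components E \<B> A" and B1: "B1 \<in> \<B>" and B2: "B2 \<in> \<B>"
  shows "card (A \<inter> B1) = card (A \<inter> B2)"
proof -
  obtain C D where C: "component_decomposition E \<B> C" and D: "D \<subseteq> C" "A = \<Union> (fst ` D)"
    using u unfolding union_of_components_def by blast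
  have finC: "finite C" and comp: "\<forall>c\<in>C. fst c \<noteq> {} \<and> connected_matroid (fst c) (snd c)"
    and dis: "\<forall>c\<in>C. \<forall>d\<in>C. c \<noteq> d \<longrightarrow> fst c \<inter> fst d = {}"
    and Beq: "\<B> = {\<Union> (f ` C) | f. \<forall>c\<in>C. f c \<in> snd c}"
    using cd_fin[OF C] cd_comp[OF C] cd_dis[OF C] cd_bases[OF C] by blast+
  have mc: "\<And>c. c \<in> C \<Longrightarrow> matroid (fst c) (snd c)" using comp unfolding connected_matroid_def by blast
  have key: "\<And>f. \<forall>c\<in>C. f c \<in> snd c \<Longrightarrow> card (A \<inter> \<Union> (f ` C)) = (\<Sum>c\<in>D. card (f c))"
  proof -
    fix f assume f: "\<forall>c\<in>C. f c \<in> snd c"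
    have sub: "\<And>c. c \<in> C \<Longrightarrow> f c \<subseteq> fst c" using f mc mat_sub by blast
    have "A \<inter> \<Union> (f ` C) = \<Union> (f ` D)"
    proof
      show "A \<inter> \<Union> (f ` C) \<subseteq> \<Union> (f ` D)"
      proof
        fix x assume "x \<in> A \<inter> \<Union> (f ` C)"
        then obtain c d where "c \<in> C" "x \<in> f c" "d \<in> D" "x \<in> fst d" using D by blast
        then have "c = d" using sub dis D by blast
        then show "x \<in> \<Union> (f ` D)" using \<open>x \<in> f c\<close> \<open>d \<in> D\<close> by blast
      qed
      show "\<Union> (f ` D) \<subseteq> A \<inter> \<Union> (f ` C)" using D sub by blast
    qed
    moreover have "card (\<Union> (f ` D)) = (\<Sum>c\<in>D. card (f c))"
    proof (rule card_UN_disjoint)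
      show "finite D" using D finC finite_subset by blast
      show "\<forall>i\<in>D. finite (f i)" using D f mc mat_fin_basis by blast
      show "\<forall>i\<in>D. \<forall>j\<in>D. i \<noteq> j \<longrightarrow> f i \<inter> f j = {}" using D sub dis by blast
    qed
    ultimately show "card (A \<inter> \<Union> (f ` C)) = (\<Sum>c\<in>D. card (f c))" by simp
  qed
  obtain f1 where f1: "B1 = \<Union> (f1 ` C)" "\<forall>c\<in>C. f1 c \<in> snd c" using B1 Beq by blast
  obtain f2 where f2: "B2 = \<Union> (f2 ` C)" "\<forall>c\<in>C. f2 c \<in> snd c" using B2 Beq by blast
  have "(\<Sum>c\<in>D. card (f1 c)) = (\<Sum>c\<in>D. card (f2 c))"
    using D f1 f2 mc bases_card_eq by (intro sum.cong) blast+
  then show ?thesis using key[OF f1(2)] key[OF f2(2)] f1 f2 by simp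
qed



definition chi :: "'e::finite set \<Rightarrow> real^'e" where "chi B = (\<chi> e. if e \<in> B then 1 else 0)"

lemma chi_nth: "chi B $ i = (if i \<in> B then 1 else 0)" by (simp add: chi_def)

lemma chi_inj: "inj chi"
proof (rule injI)
  fix B1 B2 :: "'e::finite set" assume "chi B1 = chi B2"
  then have "\<forall>i. (if i \<in> B1 then 1 else 0 :: real) = (if i \<in> B2 then 1 else 0)" by (metis chi_nth)
  then show "B1 = B2" by (metis (mono_tags) subsetI subset_antisym zero_neq_one)
qed

lemma bp_eq: "base_polytope \<B> = convex hull (chi ` \<B>)"
  unfolding base_polytope_def chi_def by simp

lemma L_comp: "(\<Sum>B\<in>\<B>. w B *\<^sub>R chi B) $ i = (\<Sum>B\<in>{B\<in>\<B>. i \<in> B}. w B)"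
proof -
  have "(\<Sum>B\<in>\<B>. w B *\<^sub>R chi B) $ i = (\<Sum>B\<in>\<B>. if i \<in> B then w B else 0)"
    by (auto simp: sum_component chi_nth intro!: sum.cong)
  also have "\<dots> = (\<Sum>B\<in>{B\<in>\<B>. i \<in> B}. w B)" by (cases "finite \<B>") (simp_all add: sum.inter_filter)
  finally show ?thesis .
qed

lemma L_hull:
  fixes \<B> :: "'e::finite set set"
  assumes fin: "finite \<B>" and z: "z \<in> convex hull (chi ` \<B>)"
  shows "\<exists>w. (\<forall>B\<in>\<B>. 0 \<le> w B) \<and> sum w \<B> = 1 \<and> (\<forall>i. (\<Sum>B\<in>{B\<in>\<B>. i \<in> B}. w B) = z $ i)"
proof -
  obtain u where u: "\<forall>x\<in>chi ` \<B>. 0 \<le> u x" "sum u (chi ` \<B>) = 1" "(\<Sum>x\<in>chi ` \<B>. u x *\<^sub>R x) = z"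
    using z convex_hull_finite[of "chi ` \<B>"] fin by auto
  have inj: "inj_on chi \<B>" using chi_inj inj_on_subset by blast
  have s1: "sum (u \<circ> chi) \<B> = 1" using u(2) sum.reindex[OF inj, of u] by simp
  have s2: "(\<Sum>B\<in>\<B>. (u \<circ> chi) B *\<^sub>R chi B) = z" using u(3) sum.reindex[OF inj, of "\<lambda>x. u x *\<^sub>R x"] by simp
  show ?thesis
    apply (rule exI[of _ "u \<circ> chi"])
    using u(1) s1 s2 L_comp[of "u \<circ> chi" \<B>] by auto
qed

lemma L_ri:
  fixes \<B> :: "'e::finite set set"
  assumes fin: "finite \<B>" and w: "\<forall>B\<in>\<B>. 0 < w B" "sum w \<B> = 1" "\<forall>i. (\<Sum>B\<in>{B\<in>\<B>. i \<in> B}. w B) = z $ i"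
  shows "z \<in> rel_interior (convex hull (chi ` \<B>))"
proof -
  have inj: "inj_on chi \<B>" using chi_inj inj_on_subset by blast
  define u where "u = (\<lambda>v. w (inv_into \<B> chi v))"
  have uc: "\<And>B. B \<in> \<B> \<Longrightarrow> u (chi B) = w B" unfolding u_def using inj by simp
  have "\<forall>x\<in>chi ` \<B>. 0 < u x" using uc w(1) by auto
  moreover have "sum u (chi ` \<B>) = 1" using sum.reindex[OF inj, of u] uc w(2) by simp
  moreover have "(\<Sum>x\<in>chi ` \<B>. u x *\<^sub>R x) = z"
  proof -
    have "(\<Sum>x\<in>chi ` \<B>. u x *\<^sub>R x) = (\<Sum>B\<in>\<B>. w B *\<^sub>R chi B)"
      using sum.reindex[OF inj, of "\<lambda>x. u x *\<^sub>R x"] uc by simp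
    also have "\<dots> = z" using L_comp[of w \<B>] w(3) by (simp add: vec_eq_iff)
    finally show ?thesis .
  qed
  ultimately show ?thesis using explicit_subset_rel_interior_convex_hull_minimal[of "chi ` \<B>"] fin by blast
qed

lemma L_swap:
  fixes \<B> :: "'e set set"
  assumes "finite \<B>" "finite A"
  shows "(\<Sum>e\<in>A. \<Sum>B\<in>{B\<in>\<B>. e \<in> B}. \<mu> B) = (\<Sum>B\<in>\<B>. real (card (A \<inter> B)) * \<mu> B)"
proof -
  have "(\<Sum>e\<in>A. \<Sum>B\<in>{B\<in>\<B>. e \<in> B}. \<mu> B) = (\<Sum>e\<in>A. \<Sum>B\<in>\<B>. if e \<in> B then \<mu> B else 0)"
    using assms by (simp add: sum.inter_filter)
  also have "\<dots> = (\<Sum>B\<in>\<B>. \<Sum>e\<in>A. if e \<in> B then \<mu> B else 0)" by (rule sum.swap)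
  also have "\<dots> = (\<Sum>B\<in>\<B>. real (card (A \<inter> B)) * \<mu> B)"
  proof (rule sum.cong)
    fix B assume "B \<in> \<B>"
    have "(\<Sum>e\<in>A. if e \<in> B then \<mu> B else 0) = (\<Sum>e\<in>A \<inter> B. \<mu> B)"
      using sum.inter_restrict[OF assms(2), of "\<lambda>_. \<mu> B" B] by simp
    then show "(\<Sum>e\<in>A. if e \<in> B then \<mu> B else 0) = real (card (A \<inter> B)) * \<mu> B" by simp
  qed simp
  finally show ?thesis .
qed

context
  fixes \<B> :: "'e::finite set set"
  assumes m: "matroid (UNIV :: 'e set) \<B>" and ll: "loopless (UNIV :: 'e set) \<B>"
begin

lemma finB: "finite \<B>" using mat_fin_bases[OF m] .

lemma card_basis: "B \<in> \<B> \<Longrightarrow> card B = mrank \<B> UNIV"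
proof -
  assume B: "B \<in> \<B>"
  obtain B0 where "B0 \<in> \<B>" "card (UNIV \<inter> B0) = mrank \<B> UNIV" using mrank_att[OF m] by blast
  then show ?thesis using bases_card_eq[OF m B] by simp
qed

lemma rank_pos: "A \<noteq> {} \<Longrightarrow> mrank \<B> A \<ge> 1"
proof -
  assume "A \<noteq> {}"
  then obtain e where e: "e \<in> A" by blast
  obtain B where B: "B \<in> \<B>" "e \<in> B" using ll unfolding loopless_def by blast
  have "card (A \<inter> B) \<ge> 1" using e B mat_fin_basis[OF m B(1)]
    by (metis IntI One_nat_def Suc_leI card_gt_0_iff empty_iff finite_Int)
  then show ?thesis using mrank_ge[OF m B(1), of A] by linarith
qed

lemma r_pos: "mrank \<B> UNIV \<ge> 1" using rank_pos by blast

lemma dens_univ: "density \<B> UNIV = real CARD('e) / real (mrank \<B> UNIV)"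
  unfolding density_def by simp

lemma dens_le: "A \<noteq> {} \<Longrightarrow> (density \<B> A \<le> density \<B> UNIV) = (card A * mrank \<B> UNIV \<le> CARD('e) * mrank \<B> A)"
proof -
  assume A: "A \<noteq> {}"
  have p1: "real (mrank \<B> A) > 0" using rank_pos[OF A] by simp
  have p2: "real (mrank \<B> UNIV) > 0" using r_pos by simp
  have "(density \<B> A \<le> density \<B> UNIV) = (real (card A) * real (mrank \<B> UNIV) \<le> real CARD('e) * real (mrank \<B> A))"
    unfolding density_def using p1 p2 by (simp add: divide_simps mult.commute)
  also have "\<dots> = (card A * mrank \<B> UNIV \<le> CARD('e) * mrank \<B> A)" by (metis of_nat_le_iff of_nat_mult)
  finally show ?thesis .
qed

lemma dens_lt: "A \<noteq> {} \<Longrightarrow> (density \<B> A < density \<B> UNIV) = (card A * mrank \<B> UNIV < CARD('e) * mrank \<B> A)"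
proof -
  assume A: "A \<noteq> {}"
  have p1: "real (mrank \<B> A) > 0" using rank_pos[OF A] by simp
  have p2: "real (mrank \<B> UNIV) > 0" using r_pos by simp
  have "(density \<B> A < density \<B> UNIV) = (real (card A) * real (mrank \<B> UNIV) < real CARD('e) * real (mrank \<B> A))"
    unfolding density_def using p1 p2 by (simp add: divide_simps mult.commute)
  also have "\<dots> = (card A * mrank \<B> UNIV < CARD('e) * mrank \<B> A)" by (metis of_nat_less_iff of_nat_mult)
  finally show ?thesis .
qed


lemma q3_total:
  fixes \<mu> :: "'e set \<Rightarrow> real"
  assumes mu: "\<forall>e. (\<Sum>B\<in>{B\<in>\<B>. e \<in> B}. \<mu> B) = c"
  shows "real CARD('e) * c = real (mrank \<B> UNIV) * sum \<mu> \<B>"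
proof -
  have "(\<Sum>e\<in>(UNIV::'e set). \<Sum>B\<in>{B\<in>\<B>. e \<in> B}. \<mu> B) = (\<Sum>B\<in>\<B>. real (card (UNIV \<inter> B)) * \<mu> B)"
    using L_swap[OF finB, of UNIV \<mu>] by simp
  also have "\<dots> = (\<Sum>B\<in>\<B>. real (mrank \<B> UNIV) * \<mu> B)" using card_basis by (intro sum.cong) auto
  also have "\<dots> = real (mrank \<B> UNIV) * sum \<mu> \<B>" by (simp add: sum_distrib_left)
  finally show ?thesis using mu by simp
qed

lemma q3q2:
  fixes \<mu> :: "'e set \<Rightarrow> real"
  assumes pos: "\<forall>B\<in>\<B>. \<mu> B > 0" and mu: "\<forall>e. (\<Sum>B\<in>{B\<in>\<B>. e \<in> B}. \<mu> B) = c"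
  shows "\<forall>A. A \<noteq> {} \<longrightarrow> density \<B> A \<le> density \<B> UNIV \<and>
                (\<not> union_of_components UNIV \<B> A \<longrightarrow> density \<B> A < density \<B> UNIV)"
proof (intro allI impI)
  fix A :: "'e set" assume A: "A \<noteq> {}"
  define M where "M = sum \<mu> \<B>"
  define r where "r = mrank \<B> UNIV"
  define k where "k = mrank \<B> A"
  define n where "n = CARD('e)"
  have Mpos: "M > 0" unfolding M_def using sum_pos[OF finB mat_ne[OF m], of \<mu>] pos by blast
  have tot: "real n * c = real r * M" using q3_total[OF mu] unfolding n_def r_def M_def .
  have cA: "real (card A) * c = (\<Sum>B\<in>\<B>. real (card (A \<inter> B)) * \<mu> B)" using L_swap[OF finB, of A \<mu>] mu by simp
  have le1: "(\<Sum>B\<in>\<B>. real (card (A \<inter> B)) * \<mu> B) \<le> (\<Sum>B\<in>\<B>. real k * \<mu> B)"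
    using mrank_ge[OF m] pos unfolding k_def by (intro sum_mono mult_right_mono) (auto simp: less_imp_le)
  have "(\<Sum>B\<in>\<B>. real k * \<mu> B) = real k * M" by (simp add: M_def sum_distrib_left)
  then have cAle: "real (card A) * c \<le> real k * M" using cA le1 by simp
  have npos: "real n > 0" unfolding n_def by simp
  have "real (card A) * real r * M = real n * (real (card A) * c)" using tot by (simp add: algebra_simps)
  also have "\<dots> \<le> real n * (real k * M)" using cAle npos by simp
  finally have "real (card A) * real r * M \<le> real n * real k * M" by (simp add: algebra_simps)
  then have "real (card A) * real r \<le> real n * real k" using Mpos by simp
  then have le: "card A * r \<le> n * k" by (metis of_nat_le_iff of_nat_mult)
  show "density \<B> A \<le> density \<B> UNIV \<and> (\<not> union_of_components UNIV \<B> A \<longrightarrow> density \<B> A < density \<B> UNIV)"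
  proof
    show "density \<B> A \<le> density \<B> UNIV" using dens_le[OF A] le unfolding n_def r_def k_def by simp
    show "\<not> union_of_components UNIV \<B> A \<longrightarrow> density \<B> A < density \<B> UNIV"
    proof (rule impI, rule ccontr)
      assume nu: "\<not> union_of_components UNIV \<B> A" and nl: "\<not> density \<B> A < density \<B> UNIV"
      then have eq: "card A * r = n * k" using dens_lt[OF A] le unfolding n_def r_def k_def by simp
      then have eqr: "real (card A) * real r = real n * real k" by (metis of_nat_mult)
      have "real n * (real (card A) * c) = real (card A) * (real r * M)" using tot by (simp add: algebra_simps)
      also have "\<dots> = real n * (real k * M)" using eqr by (simp add: algebra_simps)
      finally have cAeq: "real (card A) * c = real k * M" using npos by simp
      have "(\<Sum>B\<in>\<B>. (real k - real (card (A \<inter> B))) * \<mu> B) = real k * M - real (card A) * c"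
        using cA by (simp add: algebra_simps sum_subtractf sum_distrib_left M_def)
      then have s0: "(\<Sum>B\<in>\<B>. (real k - real (card (A \<inter> B))) * \<mu> B) = 0" using cAeq by simp
      have nn: "\<forall>B\<in>\<B>. 0 \<le> (real k - real (card (A \<inter> B))) * \<mu> B"
      proof
        fix B assume B: "B \<in> \<B>"
        have "card (A \<inter> B) \<le> k" using mrank_ge[OF m B] unfolding k_def .
        moreover have "\<mu> B > 0" using pos B by blast
        ultimately show "0 \<le> (real k - real (card (A \<inter> B))) * \<mu> B" by simp
      qed
      have z: "\<forall>B\<in>\<B>. (real k - real (card (A \<inter> B))) * \<mu> B = 0"
        using iffD1[OF sum_nonneg_eq_0_iff[OF finB] s0] nn by blast
      have "\<forall>B\<in>\<B>. card (A \<inter> B) = k"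
      proof
        fix B assume B: "B \<in> \<B>"
        have "(real k - real (card (A \<inter> B))) * \<mu> B = 0" using z B by blast
        moreover have "\<mu> B > 0" using pos B by blast
        ultimately show "card (A \<inter> B) = k" by simp
      qed
      then have "union_of_components UNIV \<B> A" using sep_uoc[OF m _ _ A] by blast
      with nu show False by simp
    qed
  qed
qed

lemma inv_dens: "inverse (density \<B> UNIV) = real (mrank \<B> UNIV) / real CARD('e)"
  using dens_univ by simp

lemma q3q1:
  fixes \<mu> :: "'e set \<Rightarrow> real"
  assumes pos: "\<forall>B\<in>\<B>. \<mu> B > 0" and mu: "\<forall>e. (\<Sum>B\<in>{B\<in>\<B>. e \<in> B}. \<mu> B) = c"
  shows "(\<chi> e. inverse (density \<B> UNIV)) \<in> rel_interior (base_polytope \<B>)"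
proof -
  define M where "M = sum \<mu> \<B>"
  have Mpos: "M > 0" unfolding M_def using sum_pos[OF finB mat_ne[OF m], of \<mu>] pos by blast
  have tot: "real CARD('e) * c = real (mrank \<B> UNIV) * M" using q3_total[OF mu] unfolding M_def .
  have cM: "c / M = inverse (density \<B> UNIV)" unfolding inv_dens using tot Mpos
    by (simp add: field_simps)
  have "(\<chi> e. inverse (density \<B> UNIV)) \<in> rel_interior (convex hull (chi ` \<B>))"
  proof (rule L_ri[OF finB, of "\<lambda>B. \<mu> B / M"])
    show "\<forall>B\<in>\<B>. 0 < \<mu> B / M" using pos Mpos by simp
    show "(\<Sum>B\<in>\<B>. \<mu> B / M) = 1" using Mpos by (simp add: sum_divide_distrib[symmetric] M_def)
    show "\<forall>i. (\<Sum>B\<in>{B\<in>\<B>. i \<in> B}. \<mu> B / M) = (\<chi> e. inverse (density \<B> UNIV)) $ i"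
      using mu cM by (simp add: sum_divide_distrib[symmetric])
  qed
  then show ?thesis unfolding bp_eq .
qed

lemma avg:
  assumes x0: "\<forall>i. x0 $ i = a"
    and H: "\<forall>B0\<in>\<B>. \<exists>e>1. (1 - e) *\<^sub>R chi B0 + e *\<^sub>R x0 \<in> convex hull (chi ` \<B>)"
  shows "\<exists>\<mu> :: 'e set \<Rightarrow> real. (\<forall>B\<in>\<B>. \<mu> B > 0) \<and> (\<exists>c. \<forall>i. (\<Sum>B\<in>{B\<in>\<B>. i \<in> B}. \<mu> B) = c)"
proof -
  obtain E where E: "\<forall>B0\<in>\<B>. E B0 > 1 \<and> (1 - E B0) *\<^sub>R chi B0 + E B0 *\<^sub>R x0 \<in> convex hull (chi ` \<B>)"
    using H by metis
  have "\<forall>B0\<in>\<B>. \<exists>w. (\<forall>B\<in>\<B>. 0 \<le> w B) \<and> sum w \<B> = 1 \<and>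
      (\<forall>i. (\<Sum>B\<in>{B\<in>\<B>. i \<in> B}. w B) = ((1 - E B0) *\<^sub>R chi B0 + E B0 *\<^sub>R x0) $ i)"
    using E L_hull[OF finB] by blast
  then obtain W where W: "\<forall>B0\<in>\<B>. (\<forall>B\<in>\<B>. 0 \<le> W B0 B) \<and> sum (W B0) \<B> = 1 \<and>
      (\<forall>i. (\<Sum>B\<in>{B\<in>\<B>. i \<in> B}. W B0 B) = ((1 - E B0) *\<^sub>R chi B0 + E B0 *\<^sub>R x0) $ i)"
    by metis
  define \<mu> where "\<mu> = (\<lambda>B. \<Sum>B0\<in>\<B>. (W B0 B + (E B0 - 1) * (if B = B0 then 1 else 0)) / E B0)"
  have pos: "\<forall>B\<in>\<B>. \<mu> B > 0"
  proof
    fix B assume B: "B \<in> \<B>"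
    show "\<mu> B > 0" unfolding \<mu>_def
    proof (rule sum_pos2[OF finB B])
      show "0 < (W B B + (E B - 1) * (if B = B then 1 else 0)) / E B" using W E B by fastforce
      fix i assume i: "i \<in> \<B>"
      have "W i B \<ge> 0" "E i > 1" using W E B i by auto
      then show "0 \<le> (W i B + (E i - 1) * (if B = i then 1 else 0)) / E i"
        by (cases "B = i") auto
    qed
  qed
  have marg: "\<forall>i. (\<Sum>B\<in>{B\<in>\<B>. i \<in> B}. \<mu> B) = real (card \<B>) * a"
  proof
    fix i
    have finF: "finite {B\<in>\<B>. i \<in> B}" using finB by simp
    have inner: "\<And>B0. B0 \<in> \<B> \<Longrightarrow>
       (\<Sum>B\<in>{B\<in>\<B>. i \<in> B}. (W B0 B + (E B0 - 1) * (if B = B0 then 1 else 0)) / E B0) = a"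
    proof -
      fix B0 assume B0: "B0 \<in> \<B>"
      have e1: "E B0 > 1" using E B0 by blast
      have d: "(\<Sum>B\<in>{B\<in>\<B>. i \<in> B}. (if B = B0 then 1 else 0)) = (if i \<in> B0 then 1 else (0::real))"
        using finF B0 by (simp add: sum.delta)
      have w: "(\<Sum>B\<in>{B\<in>\<B>. i \<in> B}. W B0 B) = (1 - E B0) * (if i \<in> B0 then 1 else 0) + E B0 * a"
        using W B0 x0 by (simp add: chi_nth)
      have "(\<Sum>B\<in>{B\<in>\<B>. i \<in> B}. (W B0 B + (E B0 - 1) * (if B = B0 then 1 else 0)) / E B0)
          = ((\<Sum>B\<in>{B\<in>\<B>. i \<in> B}. W B0 B) + (E B0 - 1) * (\<Sum>B\<in>{B\<in>\<B>. i \<in> B}. (if B = B0 then 1 else 0))) / E B0"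
        by (simp only: sum_divide_distrib[symmetric] sum.distrib sum_distrib_left)
      then show "(\<Sum>B\<in>{B\<in>\<B>. i \<in> B}. (W B0 B + (E B0 - 1) * (if B = B0 then 1 else 0)) / E B0) = a"
        using d w e1 by (simp add: field_simps)
    qed
    have "(\<Sum>B\<in>{B\<in>\<B>. i \<in> B}. \<mu> B) = (\<Sum>B0\<in>\<B>. \<Sum>B\<in>{B\<in>\<B>. i \<in> B}. (W B0 B + (E B0 - 1) * (if B = B0 then 1 else 0)) / E B0)"
      unfolding \<mu>_def by (rule sum.swap)
    also have "\<dots> = (\<Sum>B0\<in>\<B>. a)" using inner by (intro sum.cong) auto
    finally show "(\<Sum>B\<in>{B\<in>\<B>. i \<in> B}. \<mu> B) = real (card \<B>) * a" by simp
  qed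
  show ?thesis using pos marg by blast
qed

lemma q1q3:
  assumes "(\<chi> e. inverse (density \<B> UNIV)) \<in> rel_interior (base_polytope \<B>)"
  shows "\<exists>\<mu> :: 'e set \<Rightarrow> real. (\<forall>B\<in>\<B>. \<mu> B > 0) \<and> (\<exists>c. \<forall>i. (\<Sum>B\<in>{B\<in>\<B>. i \<in> B}. \<mu> B) = c)"
proof (rule avg[of _ "inverse (density \<B> UNIV)"])
  show "\<forall>i. (\<chi> e. inverse (density \<B> UNIV)) $ i = inverse (density \<B> UNIV)" by simp
  have cv: "convex (convex hull (chi ` \<B>))" by simp
  have ne: "convex hull (chi ` \<B>) \<noteq> {}" using mat_ne[OF m] by simp
  have ri: "(\<chi> e. inverse (density \<B> UNIV)) \<in> rel_interior (convex hull (chi ` \<B>))" using assms unfolding bp_eq .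
  show "\<forall>B0\<in>\<B>. \<exists>e>1. (1 - e) *\<^sub>R chi B0 + e *\<^sub>R (\<chi> e. inverse (density \<B> UNIV)) \<in> convex hull (chi ` \<B>)"
  proof
    fix B0 assume "B0 \<in> \<B>"
    then have "chi B0 \<in> convex hull (chi ` \<B>)" by (simp add: hull_inc)
    then show "\<exists>e>1. (1 - e) *\<^sub>R chi B0 + e *\<^sub>R (\<chi> e. inverse (density \<B> UNIV)) \<in> convex hull (chi ` \<B>)"
      using ri convex_rel_interior_iff[OF cv ne] by blast
  qed
qed

end


lemma abel: "(\<Sum>i<n. a i * z i) = (\<Sum>k<n. (a k - a (Suc k)) * (\<Sum>i<Suc k. z i)) + a n * (\<Sum>i<n. (z i :: real))"
  by (induction n) (simp_all add: algebra_simps)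

lemma pref_sum:
  assumes "distinct xs" "k \<le> length xs"
  shows "(\<Sum>i<k. f (xs ! i)) = (\<Sum>x\<in>set (take k xs). f x)"
proof -
  have bij: "bij_betw ((!) (take k xs)) {..<k} (set (take k xs))"
    by (rule bij_betw_nth) (use assms in auto)
  have "(\<Sum>i<k. f (xs ! i)) = (\<Sum>i<k. f (take k xs ! i))" by (intro sum.cong) auto
  also have "\<dots> = (\<Sum>x\<in>set (take k xs). f x)" using sum.reindex_bij_betw[OF bij, of f] .
  finally show ?thesis .
qed

lemma chi_sum: "(\<Sum>x\<in>S. chi B $ x) = real (card (S \<inter> B))" if "finite S"
proof -
  have "(\<Sum>x\<in>S. chi B $ x) = (\<Sum>x\<in>S. if x \<in> B then 1 else 0)" by (simp add: chi_nth)
  also have "\<dots> = (\<Sum>x\<in>S \<inter> B. 1)" using sum.inter_restrict[OF that, of "\<lambda>_. 1::real" B] by simp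
  finally show ?thesis by simp
qed

context
  fixes \<B> :: "'e::finite set set"
  assumes m: "matroid (UNIV :: 'e set) \<B>" and ll: "loopless (UNIV :: 'e set) \<B>"
begin

lemma poly:
  fixes z :: "real^'e"
  assumes zA: "\<forall>A. (\<Sum>i\<in>A. z $ i) \<le> real (mrank \<B> A)" and zU: "(\<Sum>i\<in>UNIV. z $ i) = real (mrank \<B> UNIV)"
  shows "z \<in> convex hull (chi ` \<B>)"
proof (rule ccontr)
  assume nz: "z \<notin> convex hull (chi ` \<B>)"
  have cl: "closed (convex hull (chi ` \<B>))"
    using finB[OF m ll] by (simp add: compact_imp_closed finite_imp_compact_convex_hull)
  obtain a b where ab: "inner a z < b" "\<forall>x\<in>convex hull (chi ` \<B>). inner a x > b"
    using separating_hyperplane_closed_point[OF convex_convex_hull cl nz] by blast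
  define w where "w i = - a $ i" for i
  have lt: "\<forall>B\<in>\<B>. (\<Sum>i\<in>UNIV. w i * chi B $ i) < (\<Sum>i\<in>UNIV. w i * z $ i)"
  proof
    fix B assume "B \<in> \<B>"
    then have "chi B \<in> convex hull (chi ` \<B>)" by (simp add: hull_inc)
    then have "inner a (chi B) > b" using ab(2) by blast
    then show "(\<Sum>i\<in>UNIV. w i * chi B $ i) < (\<Sum>i\<in>UNIV. w i * z $ i)"
      using ab(1) unfolding w_def inner_vec_def by (simp add: sum_negf)
  qed
  obtain xs where xs: "set xs = (UNIV::'e set)" "distinct xs" using finite_distinct_list[of "UNIV::'e set"] by auto
  define es where "es = sort_key (\<lambda>i. - w i) xs"
  have es: "set es = UNIV" "distinct es" "sorted (map (\<lambda>i. - w i) es)"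
    unfolding es_def using xs by (simp_all add: sorted_sort_key)
  define n where "n = length es"
  have npos: "n \<ge> 1" unfolding n_def using es(1)
    by (metis One_nat_def Suc_leI UNIV_not_empty length_greater_0_conv set_empty)
  define aa where "aa k = w (es ! min k (n - 1))" for k
  have aa_lt: "\<And>k. k < n \<Longrightarrow> aa k = w (es ! k)" unfolding aa_def by simp
  have mono: "\<And>k. k < n \<Longrightarrow> aa (Suc k) \<le> aa k"
  proof -
    fix k assume k: "k < n"
    show "aa (Suc k) \<le> aa k"
    proof (cases "Suc k < n")
      case True
      have "(map (\<lambda>i. - w i) es) ! k \<le> (map (\<lambda>i. - w i) es) ! (Suc k)"
        using es(3) True n_def by (intro sorted_nth_mono) auto
      then show ?thesis using True k aa_lt n_def by simp
    next
      case False
      then have "n - 1 = k" using k by simp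
      then show ?thesis unfolding aa_def by (simp add: min_def)
    qed
  qed
  have sumU: "\<And>f. (\<Sum>i\<in>UNIV. f i) = (\<Sum>k<n. f (es ! k))"
    using pref_sum[OF es(2), of n] es(1) n_def by (metis order_refl take_all)
  have sumP: "\<And>f k. k < n \<Longrightarrow> (\<Sum>i<Suc k. f (es ! i)) = (\<Sum>x\<in>set (take (Suc k) es). f x)"
  proof -
    fix f k assume "k < n"
    then show "(\<Sum>i<Suc k. f (es ! i)) = (\<Sum>x\<in>set (take (Suc k) es). f x)"
      using pref_sum[OF es(2), of "Suc k" f] n_def by linarith
  qed
  obtain B where B: "B \<in> \<B>" "\<forall>j\<le>n. card (set (take j es) \<inter> B) = mrank \<B> (set (take j es))"
    using chain_basis[OF m, of n es] n_def by auto
  define T where "T k = set (take (Suc k) es)" for k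
  define R where "R = (\<Sum>k<n. (aa k - aa (Suc k)) * real (mrank \<B> (T k))) + aa n * real (mrank \<B> UNIV)"
  have Z: "(\<Sum>i\<in>UNIV. w i * z $ i) \<le> R"
  proof -
    have "(\<Sum>i\<in>UNIV. w i * z $ i) = (\<Sum>k<n. aa k * z $ (es ! k))"
      using sumU aa_lt by simp
    also have "\<dots> = (\<Sum>k<n. (aa k - aa (Suc k)) * (\<Sum>i<Suc k. z $ (es ! i))) + aa n * (\<Sum>i<n. z $ (es ! i))"
      by (rule abel)
    also have "\<dots> \<le> R" unfolding R_def
    proof (rule add_mono)
      show "(\<Sum>k<n. (aa k - aa (Suc k)) * (\<Sum>i<Suc k. z $ (es ! i))) \<le> (\<Sum>k<n. (aa k - aa (Suc k)) * real (mrank \<B> (T k)))"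
      proof (rule sum_mono)
        fix k assume "k \<in> {..<n}"
        then have k: "k < n" by simp
        have "(\<Sum>i<Suc k. z $ (es ! i)) = (\<Sum>x\<in>T k. z $ x)" unfolding T_def using sumP[OF k] .
        also have "\<dots> \<le> real (mrank \<B> (T k))" using zA by blast
        finally show "(aa k - aa (Suc k)) * (\<Sum>i<Suc k. z $ (es ! i)) \<le> (aa k - aa (Suc k)) * real (mrank \<B> (T k))"
          using mono[OF k] by (intro mult_left_mono) auto
      qed
      show "aa n * (\<Sum>i<n. z $ (es ! i)) \<le> aa n * real (mrank \<B> UNIV)"
        using sumU[of "\<lambda>i. z $ i"] zU by simp
    qed
    finally show ?thesis .
  qed
  have BB: "(\<Sum>i\<in>UNIV. w i * chi B $ i) = R"
  proof -
    have "(\<Sum>i\<in>UNIV. w i * chi B $ i) = (\<Sum>k<n. aa k * chi B $ (es ! k))"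
      using sumU aa_lt by simp
    also have "\<dots> = (\<Sum>k<n. (aa k - aa (Suc k)) * (\<Sum>i<Suc k. chi B $ (es ! i))) + aa n * (\<Sum>i<n. chi B $ (es ! i))"
      by (rule abel)
    also have "\<dots> = R" unfolding R_def
    proof -
      have "(\<Sum>k<n. (aa k - aa (Suc k)) * (\<Sum>i<Suc k. chi B $ (es ! i))) = (\<Sum>k<n. (aa k - aa (Suc k)) * real (mrank \<B> (T k)))"
      proof (rule sum.cong)
        fix k assume "k \<in> {..<n}"
        then have k: "k < n" by simp
        have "(\<Sum>i<Suc k. chi B $ (es ! i)) = (\<Sum>x\<in>T k. chi B $ x)" unfolding T_def using sumP[OF k] .
        also have "\<dots> = real (card (T k \<inter> B))" by (rule chi_sum) simp
        also have "\<dots> = real (mrank \<B> (T k))" using B(2) k unfolding T_def by simp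
        finally show "(aa k - aa (Suc k)) * (\<Sum>i<Suc k. chi B $ (es ! i)) = (aa k - aa (Suc k)) * real (mrank \<B> (T k))" by simp
      qed simp
      moreover have "(\<Sum>i<n. chi B $ (es ! i)) = real (mrank \<B> UNIV)"
      proof -
        have "(\<Sum>i<n. chi B $ (es ! i)) = (\<Sum>i\<in>UNIV. chi B $ i)" using sumU[of "\<lambda>i. chi B $ i"] by simp
        also have "\<dots> = real (card (UNIV \<inter> B))" by (rule chi_sum) simp
        finally show ?thesis using card_basis[OF m ll B(1)] by simp
      qed
      ultimately show "(\<Sum>k<n. (aa k - aa (Suc k)) * (\<Sum>i<Suc k. chi B $ (es ! i))) + aa n * (\<Sum>i<n. chi B $ (es ! i))
         = (\<Sum>k<n. (aa k - aa (Suc k)) * real (mrank \<B> (T k))) + aa n * real (mrank \<B> UNIV)" by simp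
    qed
    finally show ?thesis .
  qed
  show False using lt B(1) Z BB by fastforce
qed


definition Q2 :: "'e set set \<Rightarrow> bool" where
  "Q2 \<B>' \<longleftrightarrow> (\<forall>A. A \<noteq> {} \<longrightarrow> density \<B>' A \<le> density \<B>' UNIV \<and>
                (\<not> union_of_components UNIV \<B>' A \<longrightarrow> density \<B>' A < density \<B>' UNIV))"

lemma uoc_eq:
  assumes q2: "Q2 \<B>" and A: "A \<noteq> {}" and u: "union_of_components UNIV \<B> A"
  shows "card A * mrank \<B> UNIV = CARD('e) * mrank \<B> A"
proof -
  define r where "r = mrank \<B> UNIV"
  define k where "k = mrank \<B> A"
  define n where "n = CARD('e)"
  obtain B1 where B1: "B1 \<in> \<B>" "card (A \<inter> B1) = k" using mrank_att[OF m] k_def by blast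
  have allk: "\<forall>B\<in>\<B>. card (A \<inter> B) = k" using uoc_sep[OF u] B1 by metis
  have le1: "card A * r \<le> n * k" using q2 A dens_le[OF m ll A] unfolding Q2_def r_def n_def k_def by blast
  show ?thesis
  proof (cases "A = UNIV")
    case True
    then show ?thesis by simp
  next
    case False
    define A' where "A' = UNIV - A"
    have A'ne: "A' \<noteq> {}" using False A'_def by blast
    have kr: "k \<le> r"
    proof -
      have "card (A \<inter> B1) \<le> card B1" using mat_fin_basis[OF m B1(1)] by (simp add: card_mono)
      then show ?thesis using B1(2) card_basis[OF m ll B1(1)] r_def by simp
    qed
    obtain d where rd: "r = k + d" using kr le_iff_add by blast
    have allk': "\<forall>B\<in>\<B>. card (A' \<inter> B) = d"
    proof
      fix B assume B: "B \<in> \<B>"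
      have "A' \<inter> B = B - A" unfolding A'_def by blast
      then have "card (A' \<inter> B) = card B - card (B \<inter> A)" by (simp add: card_Diff_subset_Int)
      also have "\<dots> = d"
      proof -
        have "B \<inter> A = A \<inter> B" by blast
        then have "card (B \<inter> A) = k" using allk B by simp
        then show ?thesis using card_basis[OF m ll B] r_def rd by simp
      qed
      finally show "card (A' \<inter> B) = d" .
    qed
    obtain B2 where B2: "B2 \<in> \<B>" "card (A' \<inter> B2) = mrank \<B> A'" using mrank_att[OF m] by blast
    have k': "mrank \<B> A' = d" using allk' B2 by simp
    have le2: "card A' * r \<le> n * d"
      using q2 A'ne dens_le[OF m ll A'ne] k' unfolding Q2_def r_def n_def by simp
    have cA': "card A' = n - card A" unfolding A'_def n_def by (simp add: card_Diff_subset)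
    have cAn: "card A \<le> n" unfolding n_def by (simp add: card_mono)
    have cc: "card A + card A' = n" using cA' cAn by simp
    have "(card A + card A') * r = n * r" using cc by simp
    then have d1: "card A * r + card A' * r = n * r" by (simp add: add_mult_distrib)
    have d2: "n * r = n * k + n * d" using rd by (simp add: distrib_left)
    have "card A * r = n * k" using le1 le2 d1 d2 by linarith
    then show ?thesis unfolding r_def n_def k_def .
  qed
qed

lemma q2q3:
  assumes q2: "Q2 \<B>"
  shows "\<exists>\<mu> :: 'e set \<Rightarrow> real. (\<forall>B\<in>\<B>. \<mu> B > 0) \<and> (\<exists>c. \<forall>i. (\<Sum>B\<in>{B\<in>\<B>. i \<in> B}. \<mu> B) = c)"
proof (rule avg[OF m ll, of "\<chi> e. inverse (density \<B> UNIV)" "inverse (density \<B> UNIV)"])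
  show "\<forall>i. (\<chi> e. inverse (density \<B> UNIV)) $ i = inverse (density \<B> UNIV)" by simp
  define r where "r = mrank \<B> UNIV"
  define n where "n = CARD('e)"
  define e where "e = 1 + 1 / (real n * real r)"
  have rpos: "r \<ge> 1" using r_pos[OF m ll] r_def by simp
  have npos: "n \<ge> 1" unfolding n_def by (simp add: Suc_leI)
  have e1: "e > 1" unfolding e_def using rpos npos by simp
  have invd: "inverse (density \<B> UNIV) = real r / real n" using inv_dens[OF m ll] r_def n_def by simp
  show "\<forall>B0\<in>\<B>. \<exists>e>1. (1 - e) *\<^sub>R chi B0 + e *\<^sub>R (\<chi> e. inverse (density \<B> UNIV)) \<in> convex hull (chi ` \<B>)"
  proof
    fix B0 assume B0: "B0 \<in> \<B>"
    define y where "y = (1 - e) *\<^sub>R chi B0 + e *\<^sub>R (\<chi> e. inverse (density \<B> UNIV))"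
    have yi: "\<And>i. y $ i = (1 - e) * chi B0 $ i + e * (real r / real n)" unfolding y_def invd by simp
    have ysum: "\<And>A. (\<Sum>i\<in>A. y $ i) = (1 - e) * real (card (A \<inter> B0)) + e * real (card A) * real r / real n"
    proof -
      fix A :: "'e set"
      have "(\<Sum>i\<in>A. y $ i) = (1 - e) * (\<Sum>i\<in>A. chi B0 $ i) + e * (real r / real n) * real (card A)"
        by (simp add: yi sum.distrib sum_distrib_left)
      then show "(\<Sum>i\<in>A. y $ i) = (1 - e) * real (card (A \<inter> B0)) + e * real (card A) * real r / real n"
        by (simp add: chi_sum)
    qed
    have "y \<in> convex hull (chi ` \<B>)"
    proof (rule poly)
      show "(\<Sum>i\<in>UNIV. y $ i) = real (mrank \<B> UNIV)"
        using ysum[of UNIV] card_basis[OF m ll B0] npos unfolding r_def n_def[symmetric] by (simp add: field_simps)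
      show "\<forall>A. (\<Sum>i\<in>A. y $ i) \<le> real (mrank \<B> A)"
      proof
        fix A :: "'e set"
        define k where "k = mrank \<B> A"
        define c where "c = card A"
        define cb where "cb = card (A \<inter> B0)"
        show "(\<Sum>i\<in>A. y $ i) \<le> real (mrank \<B> A)"
        proof (cases "A = {}")
          case True then show ?thesis by simp
        next
          case Ane: False
          show ?thesis
          proof (cases "union_of_components UNIV \<B> A")
            case True
            have eq: "c * r = n * k" using uoc_eq[OF q2 Ane True] unfolding c_def r_def n_def k_def .
            obtain B1 where B1: "B1 \<in> \<B>" "card (A \<inter> B1) = k" using mrank_att[OF m] k_def by blast
            have "cb = k" using uoc_sep[OF True B0 B1(1)] B1(2) cb_def by simp
            have eqr: "real c * real r = real n * real k" using eq by (metis of_nat_mult)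
            have "(\<Sum>i\<in>A. y $ i) = (1 - e) * real cb + e * (real c * real r) / real n"
              using ysum unfolding cb_def c_def by simp
            also have "\<dots> = real k" using eqr \<open>cb = k\<close> npos by (simp add: field_simps)
            finally show ?thesis unfolding k_def by simp
          next
            case False
            have lt: "c * r < n * k" using q2 Ane False dens_lt[OF m ll Ane] unfolding Q2_def c_def r_def n_def k_def by blast
            then have lt': "real c * real r + 1 \<le> real n * real k" by (metis Suc_leI of_nat_Suc of_nat_le_iff of_nat_mult add.commute)
            have cn: "real c \<le> real n" unfolding c_def n_def by (simp add: card_mono)
            have t1: "(1 - e) * real cb \<le> 0" using e1 by (simp add: mult_nonpos_nonneg)
            have "e * real c * real r / real n = real c * real r / real n + real c / (real n * real n)"
              unfolding e_def using rpos npos by (simp add: field_simps)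
            also have "\<dots> \<le> real c * real r / real n + 1 / real n"
              using cn npos by (simp add: field_simps)
            also have "\<dots> = (real c * real r + 1) / real n" by (simp add: add_divide_distrib)
            also have "\<dots> \<le> real k"
            proof -
              have "real n > 0" using npos by simp
              then show ?thesis using lt' by (simp add: pos_divide_le_eq mult.commute)
            qed
            finally have "e * real c * real r / real n \<le> real k" .
            then show ?thesis using ysum[of A] t1 unfolding cb_def c_def k_def by linarith
          qed
        qed
      qed
    qed
    then show "\<exists>e>1. (1 - e) *\<^sub>R chi B0 + e *\<^sub>R (\<chi> e. inverse (density \<B> UNIV)) \<in> convex hull (chi ` \<B>)"
      using e1 unfolding y_def by blast
  qed
qed

end

theorem theorem2p10:
  fixes \<B> :: "'e::finite set set"
  assumes "matroid (UNIV :: 'e set) \<B>"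
    and "loopless (UNIV :: 'e set) \<B>"
  shows "(((\<chi> e. inverse (density \<B> UNIV)) \<in> rel_interior (base_polytope \<B>))
         = (\<forall>A. A \<noteq> {} \<longrightarrow> density \<B> A \<le> density \<B> UNIV \<and>
                (\<not> union_of_components UNIV \<B> A \<longrightarrow> density \<B> A < density \<B> UNIV)))
       \<and> ( (\<forall>A. A \<noteq> {} \<longrightarrow> density \<B> A \<le> density \<B> UNIV \<and>
                (\<not> union_of_components UNIV \<B> A \<longrightarrow> density \<B> A < density \<B> UNIV))
         = (\<exists>\<mu> :: 'e set \<Rightarrow> real. (\<forall>B\<in>\<B>. \<mu> B > 0) \<and>
                (\<exists>c. \<forall>e. (\<Sum>B\<in>{B\<in>\<B>. e \<in> B}. \<mu> B) = c)))"
  proof -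
  have m: "matroid (UNIV :: 'e set) \<B>" and ll: "loopless (UNIV :: 'e set) \<B>" using assms by blast+
  have i13: "((\<chi> e. inverse (density \<B> UNIV)) \<in> rel_interior (base_polytope \<B>)) \<Longrightarrow>
      (\<exists>\<mu> :: 'e set \<Rightarrow> real. (\<forall>B\<in>\<B>. \<mu> B > 0) \<and> (\<exists>c. \<forall>e. (\<Sum>B\<in>{B\<in>\<B>. e \<in> B}. \<mu> B) = c))"
    using q1q3[OF m ll] by blast
  have i31: "(\<exists>\<mu> :: 'e set \<Rightarrow> real. (\<forall>B\<in>\<B>. \<mu> B > 0) \<and> (\<exists>c. \<forall>e. (\<Sum>B\<in>{B\<in>\<B>. e \<in> B}. \<mu> B) = c))
      \<Longrightarrow> ((\<chi> e. inverse (density \<B> UNIV)) \<in> rel_interior (base_polytope \<B>))"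
    using q3q1[OF m ll] by blast
  have i32: "(\<exists>\<mu> :: 'e set \<Rightarrow> real. (\<forall>B\<in>\<B>. \<mu> B > 0) \<and> (\<exists>c. \<forall>e. (\<Sum>B\<in>{B\<in>\<B>. e \<in> B}. \<mu> B) = c))
      \<Longrightarrow> (\<forall>A. A \<noteq> {} \<longrightarrow> density \<B> A \<le> density \<B> UNIV \<and>
                (\<not> union_of_components UNIV \<B> A \<longrightarrow> density \<B> A < density \<B> UNIV))"
    using q3q2[OF m ll] by blast
  have i23: "(\<forall>A. A \<noteq> {} \<longrightarrow> density \<B> A \<le> density \<B> UNIV \<and>
                (\<not> union_of_components UNIV \<B> A \<longrightarrow> density \<B> A < density \<B> UNIV)) \<Longrightarrow>
      (\<exists>\<mu> :: 'e set \<Rightarrow> real. (\<forall>B\<in>\<B>. \<mu> B > 0) \<and> (\<exists>c. \<forall>e. (\<Sum>B\<in>{B\<in>\<B>. e \<in> B}. \<mu> B) = c))"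
  proof -
    assume h: "\<forall>A. A \<noteq> {} \<longrightarrow> density \<B> A \<le> density \<B> UNIV \<and>
                (\<not> union_of_components UNIV \<B> A \<longrightarrow> density \<B> A < density \<B> UNIV)"
    have "Q2 \<B>" by (subst Q2_def[OF m ll]) (rule h)
    then show ?thesis by (rule q2q3[OF m ll])
  qed
  show ?thesis using i13 i31 i32 i23 by blast
qed

end
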